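(* Let $\mathbf{L}=\langle L,\leq,0,1\rangle$ be a totally ordered complete lattice, let $f\colon L\to L$ be an order embedding, and let $\mathcal{D}_1,\mathcal{D}_2,\mathcal{D}_3$ be ranked data tables for which both sides of the following equalities are defined. Then (1) $(\mathcal{D}_1\div^{\mathcal{D}_3}\mathcal{D}_2)\circ f=(\mathcal{D}_1\circ f)\div^{\mathcal{D}_3\circ f}(\mathcal{D}_2\circ f)$; (2) $(\mathcal{D}_1\rightarrow^{\mathcal{D}_3}\mathcal{D}_2)\circ f=(\mathcal{D}_1\circ f)\rightarrow^{\mathcal{D}_3\circ f}(\mathcal{D}_2\circ f)$; (3) if $f(0)=0$, then $(\mathcal{D}_1-\mathcal{D}_2)\circ f=(\mathcal{D}_1\circ f)-(\mathcal{D}_2\circ f)$; (4) if $f(1)=1$, then $f(\mathrm{S}(\mathcal{D}_1,\mathcal{D}_2))=\mathrm{S}(\mathcal{D}_1\circ f,\mathcal{D}_2\circ f)$.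
   Context: A relation scheme is a finite set of attributes, each with a (at most countable) set of admissible values; $\mathrm{Tupl}(R)$ is the set of tuples on $R$ (maps assigning to each attribute of $R$ an admissible value). For disjoint $R,S$ and $r\in\mathrm{Tupl}(R)$, $s\in\mathrm{Tupl}(S)$, $rs$ is the tuple on $R\cup S$ extending both. A ranked data table (RDT) on $R$ is a map $\mathcal{D}\colon\mathrm{Tupl}(R)\to L$ with $\{r;\ \mathcal{D}(r)>0\}$ finite. $\mathcal{D}\circ f$ denotes $r\mapsto f(\mathcal{D}(r))$, and operations are applied to such maps by the same formulas. On $L$ define $a\rightarrow b=1$ if $a\leq b$ and $a\rightarrow b=b$ otherwise; $a\ominus b=0$ if $a\leq b$ and $a\ominus b=a$ otherwise. Operations: for $\mathcal{D}_1$ on $R\cup S$ with $R\cap S=\emptyset$, $\mathcal{D}_2$ on $S$ and $\mathcal{D}_3$ on $R$, the division is the map on $\mathrm{Tupl}(R)$ given by $(\mathcal{D}_1\div^{\mathcal{D}_3}\mathcal{D}_2)(r)=\inf\big(\{\mathcal{D}_2(s)\rightarrow\mathcal{D}_1(rs);\ s\in\mathrm{Tupl}(S)\}\cup\{\mathcal{D}_3(r)\}\big)$. For $\mathcal{D}_1,\mathcal{D}_2,\mathcal{D}_3$ on the same $R$: $(\mathcal{D}_1\rightarrow^{\mathcal{D}_3}\mathcal{D}_2)(r)=\inf\{\mathcal{D}_3(r),\mathcal{D}_1(r)\rightarrow\mathcal{D}_2(r)\}$. For $\mathcal{D}_1,\mathcal{D}_2$ on the same $R$: $(\mathcal{D}_1-\mathcal{D}_2)(r)=\mathcal{D}_1(r)\ominus\mathcal{D}_2(r)$,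 and the subsethood score is $\mathrm{S}(\mathcal{D}_1,\mathcal{D}_2)=\inf\{\mathcal{D}_1(r)\rightarrow\mathcal{D}_2(r);\ r\in\mathrm{Tupl}(R)\}\in L$. A map $f$ is an order embedding if $a\leq b \iff f(a)\leq f(b)$. *)

theory Defs
  imports Main "HOL-Library.Countable_Set"
begin

text \<open>Attributes have type 'a, values type 'v. The map dm assigns to each attribute
its set of admissible values.\<close>

definition tuples :: "('a \<Rightarrow> 'v set) \<Rightarrow> 'a set \<Rightarrow> ('a \<rightharpoonup> 'v) set" where
  "tuples dm R = {t. dom t = R \<and> (\<forall>y\<in>R. \<exists>v\<in>dm y. t y = Some v)}"

definition rel_scheme :: "('a \<Rightarrow> 'v set) \<Rightarrow> 'a set \<Rightarrow> bool" where
  "rel_scheme dm R \<longleftrightarrow> finite R \<and> (\<forall>y\<in>R. countable (dm y))"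

text \<open>Ranked data table on R: only its values on tuples of R matter; finitely many
tuples of R get a nonzero rank.\<close>
definition is_rdt :: "('a \<Rightarrow> 'v set) \<Rightarrow> 'a set \<Rightarrow> (('a \<rightharpoonup> 'v) \<Rightarrow> 'l::complete_linorder) \<Rightarrow> bool" where
  "is_rdt dm R D \<longleftrightarrow> finite {r \<in> tuples dm R. D r > bot}"

definition resid :: "'l::complete_linorder \<Rightarrow> 'l \<Rightarrow> 'l" where
  "resid a b = (if a \<le> b then top else b)"

definition bdiff :: "'l::complete_linorder \<Rightarrow> 'l \<Rightarrow> 'l" where
  "bdiff a b = (if a \<le> b then bot else a)"

text \<open>Division of D1 (on R \<union> S) by D2 (on S) bounded by D3 (on R); a map on tuples of R.\<close>
definition rdiv :: "('a \<Rightarrow> 'v set) \<Rightarrow> 'a set \<Rightarrow> (('a \<rightharpoonup> 'v) \<Rightarrow> 'l::complete_linorder)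
   \<Rightarrow> (('a \<rightharpoonup> 'v) \<Rightarrow> 'l) \<Rightarrow> (('a \<rightharpoonup> 'v) \<Rightarrow> 'l) \<Rightarrow> ('a \<rightharpoonup> 'v) \<Rightarrow> 'l" where
  "rdiv dm S D1 D2 D3 r = Inf ({resid (D2 s) (D1 (r ++ s)) | s. s \<in> tuples dm S} \<union> {D3 r})"

definition rimpl :: "(('a \<rightharpoonup> 'v) \<Rightarrow> 'l::complete_linorder) \<Rightarrow> (('a \<rightharpoonup> 'v) \<Rightarrow> 'l)
   \<Rightarrow> (('a \<rightharpoonup> 'v) \<Rightarrow> 'l) \<Rightarrow> ('a \<rightharpoonup> 'v) \<Rightarrow> 'l" where
  "rimpl D1 D2 D3 r = inf (D3 r) (resid (D1 r) (D2 r))"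

definition rminus :: "(('a \<rightharpoonup> 'v) \<Rightarrow> 'l::complete_linorder) \<Rightarrow> (('a \<rightharpoonup> 'v) \<Rightarrow> 'l)
   \<Rightarrow> ('a \<rightharpoonup> 'v) \<Rightarrow> 'l" where
  "rminus D1 D2 r = bdiff (D1 r) (D2 r)"

definition subsethood :: "('a \<Rightarrow> 'v set) \<Rightarrow> 'a set \<Rightarrow> (('a \<rightharpoonup> 'v) \<Rightarrow> 'l::complete_linorder)
   \<Rightarrow> (('a \<rightharpoonup> 'v) \<Rightarrow> 'l) \<Rightarrow> 'l" where
  "subsethood dm R D1 D2 = Inf {resid (D1 r) (D2 r) | r. r \<in> tuples dm R}"

definition order_embedding :: "('l::order \<Rightarrow> 'm::order) \<Rightarrow> bool" where
  "order_embedding f \<longleftrightarrow> (\<forall>a b. a \<le> b \<longleftrightarrow> f a \<le> f b)"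

end

theory Submission
  imports Defs
begin


lemma Inf_attained:
  fixes A :: "'l::complete_linorder set"
  assumes "A \<noteq> {}" "finite (A - {top})"
  shows "Inf A \<in> A"
proof (cases "A - {top} = {}")
  case True
  then have "A = {top}" using assms(1) by blast
  then show ?thesis by simp
next
  case False
  have "A \<subseteq> insert top (A - {top})" by blast
  have "Inf A = Inf (A - {top})"
    by (metis Inf_insert inf_top_left insert_Diff_single insert_absorb2 insert_Diff)
  also have "\<dots> = Min (A - {top})" using False assms(2) by (simp add: cInf_eq_Min)
  also have "\<dots> \<in> A - {top}" by (rule Min_in[OF assms(2) False])
  finally show ?thesis by blast
qed

lemma emb_le: "order_embedding f \<Longrightarrow> (f a \<le> f b) = (a \<le> b)"
  unfolding order_embedding_def by blast

lemma emb_inf: "order_embedding (f::'l::complete_linorder \<Rightarrow> 'l) \<Longrightarrow> f (inf a b) = inf (f a) (f b)"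
  unfolding order_embedding_def by (metis inf.absorb_iff2 inf.orderE le_cases)

lemma Inf_eqI2:
  fixes A :: "'l::complete_linorder set"
  assumes "m \<in> A" "\<And>x. x \<in> A \<Longrightarrow> m \<le> x"
  shows "Inf A = m"
  using assms by (meson Inf_greatest Inf_lower antisym)

theorem theorem7:
  fixes dm :: "'a \<Rightarrow> 'v set" and f :: "'l::complete_linorder \<Rightarrow> 'l"
  assumes emb: "order_embedding f"
  shows
   "(\<forall>R S (D1 :: ('a \<rightharpoonup> 'v) \<Rightarrow> 'l) D2 D3.
       rel_scheme dm R \<and> rel_scheme dm S \<and> R \<inter> S = {} \<and>
       is_rdt dm (R \<union> S) D1 \<and> is_rdt dm S D2 \<and> is_rdt dm R D3 \<and>
       is_rdt dm (R \<union> S) (f \<circ> D1) \<and> is_rdt dm S (f \<circ> D2) \<and> is_rdt dm R (f \<circ> D3)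
     \<longrightarrow> (\<forall>r\<in>tuples dm R.
           f (rdiv dm S D1 D2 D3 r) = rdiv dm S (f \<circ> D1) (f \<circ> D2) (f \<circ> D3) r))
  \<and> (\<forall>R (D1 :: ('a \<rightharpoonup> 'v) \<Rightarrow> 'l) D2 D3.
       rel_scheme dm R \<and> is_rdt dm R D1 \<and> is_rdt dm R D2 \<and> is_rdt dm R D3 \<and>
       is_rdt dm R (f \<circ> D1) \<and> is_rdt dm R (f \<circ> D2) \<and> is_rdt dm R (f \<circ> D3)
     \<longrightarrow> (\<forall>r\<in>tuples dm R.
           f (rimpl D1 D2 D3 r) = rimpl (f \<circ> D1) (f \<circ> D2) (f \<circ> D3) r))
  \<and> (f bot = bot \<longrightarrow>
     (\<forall>R (D1 :: ('a \<rightharpoonup> 'v) \<Rightarrow> 'l) D2.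
       rel_scheme dm R \<and> is_rdt dm R D1 \<and> is_rdt dm R D2 \<and>
       is_rdt dm R (f \<circ> D1) \<and> is_rdt dm R (f \<circ> D2)
     \<longrightarrow> (\<forall>r\<in>tuples dm R.
           f (rminus D1 D2 r) = rminus (f \<circ> D1) (f \<circ> D2) r)))
  \<and> (f top = top \<longrightarrow>
     (\<forall>R (D1 :: ('a \<rightharpoonup> 'v) \<Rightarrow> 'l) D2.
       rel_scheme dm R \<and> is_rdt dm R D1 \<and> is_rdt dm R D2 \<and>
       is_rdt dm R (f \<circ> D1) \<and> is_rdt dm R (f \<circ> D2)
     \<longrightarrow> f (subsethood dm R D1 D2) = subsethood dm R (f \<circ> D1) (f \<circ> D2)))"
proof (intro conjI allI impI ballI)
  fix R S and D1 D2 D3 :: "('a \<rightharpoonup> 'v) \<Rightarrow> 'l" and r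
  assume H: "rel_scheme dm R \<and> rel_scheme dm S \<and> R \<inter> S = {} \<and>
       is_rdt dm (R \<union> S) D1 \<and> is_rdt dm S D2 \<and> is_rdt dm R D3 \<and>
       is_rdt dm (R \<union> S) (f \<circ> D1) \<and> is_rdt dm S (f \<circ> D2) \<and> is_rdt dm R (f \<circ> D3)"
  define A where "A = {resid (D2 s) (D1 (r ++ s)) | s. s \<in> tuples dm S} \<union> {D3 r}"
  define B where "B = {resid ((f \<circ> D2) s) ((f \<circ> D1) (r ++ s)) | s. s \<in> tuples dm S} \<union> {(f \<circ> D3) r}"
  have fin: "finite {s \<in> tuples dm S. D2 s > bot}" using H unfolding is_rdt_def by blast
  have "A - {top} \<subseteq> (\<lambda>s. resid (D2 s) (D1 (r ++ s))) ` {s \<in> tuples dm S. D2 s > bot} \<union> {D3 r}"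
  proof
    fix x assume x: "x \<in> A - {top}"
    then consider "x = D3 r" | s where "s \<in> tuples dm S" "x = resid (D2 s) (D1 (r ++ s))"
      unfolding A_def by blast
    then show "x \<in> (\<lambda>s. resid (D2 s) (D1 (r ++ s))) ` {s \<in> tuples dm S. D2 s > bot} \<union> {D3 r}"
    proof cases
      case 1 then show ?thesis by simp
    next
      case 2
      have "D2 s > bot"
      proof (rule ccontr)
        assume "\<not> D2 s > bot"
        then have "D2 s = bot" using bot.not_eq_extremum by blast
        then have "x = top" using 2 by (simp add: resid_def)
        then show False using x by simp
      qed
      then show ?thesis using 2 by blast
    qed
  qed
  then have "finite (A - {top})" using fin by (meson finite_Un finite_imageI finite_insert finite.emptyI finite_subset)
  then have mA: "Inf A \<in> A" by (intro Inf_attained) (auto simp: A_def)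
  define m where "m = Inf A"
  have lb: "\<And>x. x \<in> A \<Longrightarrow> m \<le> x" unfolding m_def by (rule Inf_lower)
  have "f m \<in> B"
  proof -
    from mA consider "m = D3 r" | s where "s \<in> tuples dm S" "m = resid (D2 s) (D1 (r ++ s))"
      unfolding A_def m_def by blast
    then show ?thesis
    proof cases
      case 1 then show ?thesis by (simp add: B_def)
    next
      case 2
      show ?thesis
      proof (cases "D2 s \<le> D1 (r ++ s)")
        case True
        then have "m = top" using 2 by (simp add: resid_def)
        then have "D3 r = top" using lb[of "D3 r"] by (simp add: A_def top_unique)
        then show ?thesis using \<open>m = top\<close> by (simp add: B_def)
      next
        case False
        then have "resid ((f \<circ> D2) s) ((f \<circ> D1) (r ++ s)) = f m"
          using 2 by (simp add: resid_def emb_le[OF emb])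
        then show ?thesis using 2(1) unfolding B_def by force
      qed
    qed
  qed
  moreover have "\<And>y. y \<in> B \<Longrightarrow> f m \<le> y"
  proof -
    fix y assume "y \<in> B"
    then consider "y = f (D3 r)" | s where "s \<in> tuples dm S" "y = resid (f (D2 s)) (f (D1 (r ++ s)))"
      unfolding B_def by auto
    then show "f m \<le> y"
    proof cases
      case 1 then show ?thesis using lb[of "D3 r"] by (simp add: A_def emb_le[OF emb])
    next
      case 2
      then have "resid (D2 s) (D1 (r ++ s)) \<in> A" unfolding A_def by blast
      then have "m \<le> resid (D2 s) (D1 (r ++ s))" by (rule lb)
      then show ?thesis using 2 by (auto simp: resid_def emb_le[OF emb] split: if_splits)
    qed
  qed
  ultimately have "Inf B = f m" by (rule Inf_eqI2)
  then show "f (rdiv dm S D1 D2 D3 r) = rdiv dm S (f \<circ> D1) (f \<circ> D2) (f \<circ> D3) r"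
    unfolding rdiv_def m_def A_def B_def by simp
next
  fix R and D1 D2 D3 :: "('a \<rightharpoonup> 'v) \<Rightarrow> 'l" and r
  show "f (rimpl D1 D2 D3 r) = rimpl (f \<circ> D1) (f \<circ> D2) (f \<circ> D3) r"
  proof -
    have "f (D3 r) \<le> f top" using emb_le[OF emb] by simp
    then show ?thesis
      unfolding rimpl_def resid_def by (auto simp: emb_le[OF emb] emb_inf[OF emb] inf.absorb1)
  qed
next
  fix R and D1 D2 :: "('a \<rightharpoonup> 'v) \<Rightarrow> 'l" and r
  assume "f bot = bot"
  then show "f (rminus D1 D2 r) = rminus (f \<circ> D1) (f \<circ> D2) r"
    unfolding rminus_def bdiff_def by (auto simp: emb_le[OF emb])
next
  fix R and D1 D2 :: "('a \<rightharpoonup> 'v) \<Rightarrow> 'l"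
  assume ft: "f top = top"
  assume H: "rel_scheme dm R \<and> is_rdt dm R D1 \<and> is_rdt dm R D2 \<and>
       is_rdt dm R (f \<circ> D1) \<and> is_rdt dm R (f \<circ> D2)"
  define A where "A = {resid (D1 r) (D2 r) | r. r \<in> tuples dm R}"
  have fr: "\<And>a b. f (resid a b) = resid (f a) (f b)"
    using ft by (simp add: resid_def emb_le[OF emb])
  have B: "{resid ((f \<circ> D1) r) ((f \<circ> D2) r) | r. r \<in> tuples dm R} = f ` A"
    unfolding A_def by (auto simp: fr) (metis (mono_tags, lifting) fr image_eqI mem_Collect_eq)
  show "f (subsethood dm R D1 D2) = subsethood dm R (f \<circ> D1) (f \<circ> D2)"
  proof (cases "A = {}")
    case True
    then show ?thesis using B ft unfolding subsethood_def A_def[symmetric] by simp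
  next
    case False
    have fin: "finite {r \<in> tuples dm R. D1 r > bot}" using H unfolding is_rdt_def by blast
    have "A - {top} \<subseteq> (\<lambda>r. resid (D1 r) (D2 r)) ` {r \<in> tuples dm R. D1 r > bot}"
    proof
      fix x assume x: "x \<in> A - {top}"
      then obtain r where r: "r \<in> tuples dm R" "x = resid (D1 r) (D2 r)"
        unfolding A_def by blast
      have "D1 r > bot"
      proof (rule ccontr)
        assume "\<not> D1 r > bot"
        then have "D1 r = bot" using bot.not_eq_extremum by blast
        then have "x = top" using r by (simp add: resid_def)
        then show False using x by simp
      qed
      then show "x \<in> (\<lambda>r. resid (D1 r) (D2 r)) ` {r \<in> tuples dm R. D1 r > bot}" using r by blast
    qed
    then have "finite (A - {top})" using fin by (meson finite_imageI finite_subset)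
    then have mA: "Inf A \<in> A" using False by (intro Inf_attained)
    have "Inf (f ` A) = f (Inf A)"
      by (rule Inf_eqI2) (use mA Inf_lower emb_le[OF emb] in auto)
    then show ?thesis using B unfolding subsethood_def A_def[symmetric] by simp
  qed
qed

end
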